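(* Let $\mathcal{K}>0$, $\tau$ sufficiently large, $\eta\in[\tau^{-1/64},\frac12\mathcal{K}^2)$, $f_\eta$ a cutoff with cutoff parameter $\mathcal{K}$, and assume $\eta^{-1}\le\Lambda_e^{1/8}\le\tau^{1/32}$. Let $P=\mathbf{1}(h\le\Lambda_e)$. Then there is a constant $C>0$ independent of $\tau,\Lambda_e,\eta$ such that $$\left|\mathrm{Tr}_{\mathfrak{F}(P\mathfrak{H})}\big(\Gamma_{\tau,0,P}f_\eta(\mathcal{N}_P/\tau)\big)-\int_{\mathfrak{H}}f_\eta(\|Pu\|^2_{L^2})\,d\mu_0(u)\right|\le C\tau^{-1/4}.$$
   Context: $\mathbb{T}=[0,1]$ (periodic), $\mathfrak{H}=L^2(\mathbb{T};\mathbb{C})$, $h=\frac12(-\Delta+1)$ with eigenfunctions $e^{2\pi ikx}$, eigenvalues $\lambda_k=\frac12((2\pi k)^2+1)$; $P=\mathbf{1}(h\le\Lambda_e)$. $\mu_0$: centered Gaussian measure with covariance $h^{-1}$ (law of $\sum_k\lambda_k^{-1/2}g_ke^{2\pi ikx}$, $g_k$ i.i.d. standard complex Gaussians). $\mathfrak{F}(P\mathfrak{H})$ is the bosonic Fock space over the finite-dimensional space $P\mathfrak{H}$, $\mathcal{N}_P$ its number operator, $\mathbb{H}_{\tau,0,P}=\frac1\tau d\Gamma(PhP)$, and $\Gamma_{\tau,0,P}=e^{-\mathbb{H}_{\tau,0,P}}/\mathrm{Tr}\,e^{-\mathbb{H}_{\tau,0,P}}$. Cutoff: $f_\eta\in C_c^\infty([0,\infty);[0,1])$,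 $f_\eta=1$ on $[0,\mathcal{K}^2-\eta]$, $=0$ on $(\mathcal{K}^2,\infty)$, $\|f_\eta^{(j)}\|_\infty\le C_j\eta^{-j}$ ($C_j$ independent of $\eta$), $f_\eta\to\mathbf{1}_{[0,\mathcal{K}^2)}$ pointwise. *)

theory Defs
  imports "HOL-Probability.Probability"
begin

(* eigenvalues of h = (1/2)(-Delta + 1) on the torus [0,1], for e^{2 pi i k x} *)
definition lam :: "int \<Rightarrow> real" where
  "lam k = ((2 * pi * real_of_int k)^2 + 1) / 2"

(* the modes spanning P H, P = 1(h \<le> Lambda_e) *)
definition Pmodes :: "real \<Rightarrow> int set" where
  "Pmodes Le = {k. lam k \<le> Le}"

(* occupation-number configurations of the Fock space F(PH):
   the eigenbasis of both dGamma(PhP) and N_P *)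
definition occ :: "real \<Rightarrow> (int \<Rightarrow> nat) set" where
  "occ Le = {n. \<forall>k. k \<notin> Pmodes Le \<longrightarrow> n k = 0}"

(* eigenvalue of H_{tau,0,P} = (1/tau) dGamma(PhP) on configuration n *)
definition H_eig :: "real \<Rightarrow> real \<Rightarrow> (int \<Rightarrow> nat) \<Rightarrow> real" where
  "H_eig tau Le n = (\<Sum>k\<in>Pmodes Le. lam k * real (n k)) / tau"

(* eigenvalue of the number operator N_P on configuration n *)
definition N_eig :: "real \<Rightarrow> (int \<Rightarrow> nat) \<Rightarrow> real" where
  "N_eig Le n = (\<Sum>k\<in>Pmodes Le. real (n k))"

(* Tr_{F(PH)} ( Gamma_{tau,0,P} g(N_P) ), computed in the occupation basis *)
definition fock_gibbs_trace :: "real \<Rightarrow> real \<Rightarrow> (real \<Rightarrow> real) \<Rightarrow> real" where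
  "fock_gibbs_trace tau Le g =
     (\<Sum>\<^sub>\<infinity>n\<in>occ Le. exp (- H_eig tau Le n) * g (N_eig Le n))
     / (\<Sum>\<^sub>\<infinity>n\<in>occ Le. exp (- H_eig tau Le n))"

definition std_cgauss :: "complex measure" where
  "std_cgauss = density lborel (\<lambda>z. ennreal (exp (- ((cmod z)^2)) / pi))"

(* mu_0: law of the Fourier coefficient sequence (u_k)_k of
   u = sum_k lam_k^{-1/2} g_k e^{2 pi i k x}, g_k iid standard complex Gaussians *)
definition mu0 :: "(int \<Rightarrow> complex) measure" where
  "mu0 = distr (PiM UNIV (\<lambda>_. std_cgauss)) (PiM UNIV (\<lambda>_. borel))
              (\<lambda>g k. g k / complex_of_real (sqrt (lam k)))"

(* ||P u||_{L^2}^2 in terms of Fourier coefficients (Parseval) *)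
definition normP_sq :: "real \<Rightarrow> (int \<Rightarrow> complex) \<Rightarrow> real" where
  "normP_sq Le u = (\<Sum>k\<in>Pmodes Le. (cmod (u k))^2)"

(* f is a cutoff with parameter KK and cutoff parameter eta, with derivative
   bounds C j * eta^-j; D is the sequence of derivatives of f = D 0 on [0,inf) *)
definition is_cutoff ::
  "real \<Rightarrow> real \<Rightarrow> (nat \<Rightarrow> real) \<Rightarrow> (nat \<Rightarrow> real \<Rightarrow> real) \<Rightarrow> bool" where
  "is_cutoff KK eta C D \<longleftrightarrow>
     (\<forall>j. \<forall>x\<ge>0. (D j has_real_derivative D (Suc j) x) (at x within {0..})) \<and>
     (\<forall>x\<ge>0. 0 \<le> D 0 x \<and> D 0 x \<le> 1) \<and>
     (\<forall>x. 0 \<le> x \<and> x \<le> KK^2 - eta \<longrightarrow> D 0 x = 1) \<and>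
     (\<forall>x. x > KK^2 \<longrightarrow> D 0 x = 0) \<and>
     (\<forall>j. \<forall>x\<ge>0. \<bar>D j x\<bar> \<le> C j * eta powr (- real j))"

end

theory Submission
  imports Defs
begin


lemma lborel_complex_eq:
  "(lborel :: complex measure) = distr (lborel \<Otimes>\<^sub>M lborel) borel (\<lambda>(x,y). Complex x y)"
proof (rule lborel_eqI)
  fix l u :: complex
  assume le: "\<And>b. b \<in> Basis \<Longrightarrow> l \<bullet> b \<le> u \<bullet> b"
  have r: "Re l \<le> Re u" and i: "Im l \<le> Im u" using le[of 1] le[of \<i>] by (auto simp: Basis_complex_def)
  have m: "(\<lambda>(x,y). Complex x y) \<in> (lborel \<Otimes>\<^sub>M lborel) \<rightarrow>\<^sub>M (borel :: complex measure)"
    proof -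
    have "(\<lambda>p. complex_of_real (fst p) + \<i> * complex_of_real (snd p)) \<in> borel_measurable (borel :: (real \<times> real) measure)"
      by (intro borel_measurable_continuous_onI continuous_intros)
    then show ?thesis by (simp add: borel_prod[symmetric] lborel_prod case_prod_beta Complex_eq cong: measurable_cong_sets)
  qed
  have pre: "(\<lambda>(x,y). Complex x y) -` box l u \<inter> space (lborel \<Otimes>\<^sub>M lborel) = {Re l<..<Re u} \<times> {Im l<..<Im u}"
    by (auto simp: box_def Basis_complex_def space_pair_measure)
  show "emeasure (distr (lborel \<Otimes>\<^sub>M lborel) borel (\<lambda>(x,y). Complex x y)) (box l u) = (\<Prod>b\<in>Basis. (u - l) \<bullet> b)"
    using r i by (simp add: emeasure_distr[OF m] pre lborel.emeasure_pair_measure_Times Basis_complex_def ennreal_mult)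
qed simp

lemma nn_integral_complex:
  fixes h :: "complex \<Rightarrow> ennreal"
  assumes [measurable]: "h \<in> borel_measurable borel"
  shows "(\<integral>\<^sup>+z. h z \<partial>lborel) = (\<integral>\<^sup>+x. \<integral>\<^sup>+y. h (Complex x y) \<partial>lborel \<partial>lborel)"
proof -
  have m: "(\<lambda>(x,y). Complex x y) \<in> (lborel \<Otimes>\<^sub>M lborel) \<rightarrow>\<^sub>M (borel :: complex measure)"
    proof -
    have "(\<lambda>p. complex_of_real (fst p) + \<i> * complex_of_real (snd p)) \<in> borel_measurable (borel :: (real \<times> real) measure)"
      by (intro borel_measurable_continuous_onI continuous_intros)
    then show ?thesis by (simp add: borel_prod[symmetric] lborel_prod case_prod_beta Complex_eq cong: measurable_cong_sets)
  qed
  have "(\<integral>\<^sup>+z. h z \<partial>lborel) = (\<integral>\<^sup>+p. h (case p of (x,y) \<Rightarrow> Complex x y) \<partial>(lborel \<Otimes>\<^sub>M lborel))"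
    by (subst lborel_complex_eq) (simp add: nn_integral_distr[OF m])
  also have "\<dots> = (\<integral>\<^sup>+x. \<integral>\<^sup>+y. h (Complex x y) \<partial>lborel \<partial>lborel)"
    by (subst lborel.nn_integral_fst[symmetric]) (auto intro: measurable_compose[OF m])
  finally show ?thesis .
qed


lemma nn_integral_even:
  fixes g :: "real \<Rightarrow> ennreal"
  assumes [measurable]: "g \<in> borel_measurable borel" and ev: "\<And>y. g (-y) = g y"
  shows "(\<integral>\<^sup>+y. g y \<partial>lborel) = 2 * (\<integral>\<^sup>+y. g y * indicator {0..} y \<partial>lborel)"
proof -
  have "(\<integral>\<^sup>+y. g y \<partial>lborel) = (\<integral>\<^sup>+y. g y * indicator {0..} y + g y * indicator {..<0} y \<partial>lborel)"
    by (intro nn_integral_cong) (auto split: split_indicator)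
  also have "\<dots> = (\<integral>\<^sup>+y. g y * indicator {0..} y \<partial>lborel) + (\<integral>\<^sup>+y. g y * indicator {..<0} y \<partial>lborel)"
    by (intro nn_integral_add) auto
  also have "(\<integral>\<^sup>+y. g y * indicator {..<0} y \<partial>lborel) = (\<integral>\<^sup>+y. g (0 + -1 * y) * indicator {..<0} (0 + -1 * y) \<partial>lborel)"
    using nn_integral_real_affine[of "\<lambda>y. g y * indicator {..<0} y" "-1" 0] by simp
  also have "\<dots> = (\<integral>\<^sup>+y. g y * indicator {0..} y \<partial>lborel)"
    by (intro nn_integral_cong_AE, use AE_lborel_singleton[of 0] in eventually_elim)
       (auto simp: ev split: split_indicator)
  finally show ?thesis by (simp add: mult_2)
qed

lemma quadrant:
  fixes t :: real assumes t: "0 \<le> t"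
  shows "(\<integral>\<^sup>+x. (\<integral>\<^sup>+y. ennreal (exp (- (x\<^sup>2 + y\<^sup>2))) * indicator {t..} (x\<^sup>2 + y\<^sup>2) * indicator {0..} y \<partial>lborel) * indicator {0..} x \<partial>lborel)
     = ennreal (exp (-t) * pi / 4)"
proof -
  define k where "k x s = ennreal (x * exp (- (x\<^sup>2 * (1 + s\<^sup>2)))) * indicator {t..} (x\<^sup>2 * (1 + s\<^sup>2)) * indicator {0..} s * indicator {0..} x" for x s :: real
  have [measurable]: "case_prod k \<in> borel_measurable (lborel \<Otimes>\<^sub>M lborel)"
    unfolding k_def by measurable
  have step1: "(\<integral>\<^sup>+y. ennreal (exp (- (x\<^sup>2 + y\<^sup>2))) * indicator {t..} (x\<^sup>2 + y\<^sup>2) * indicator {0..} y \<partial>lborel) * indicator {0..} x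
      = (\<integral>\<^sup>+s. k x s \<partial>lborel)" if "x \<noteq> 0" for x
  proof (cases "x > 0")
    case True
    have "(\<integral>\<^sup>+y. ennreal (exp (- (x\<^sup>2 + y\<^sup>2))) * indicator {t..} (x\<^sup>2 + y\<^sup>2) * indicator {0..} y \<partial>lborel)
       = \<bar>x\<bar> * (\<integral>\<^sup>+s. ennreal (exp (- (x\<^sup>2 + (0 + x * s)\<^sup>2))) * indicator {t..} (x\<^sup>2 + (0 + x * s)\<^sup>2) * indicator {0..} (0 + x * s) \<partial>lborel)"
      by (rule nn_integral_real_affine) (use True in auto)
    also have "\<dots> = (\<integral>\<^sup>+s. ennreal x * (ennreal (exp (- (x\<^sup>2 + (0 + x * s)\<^sup>2))) * indicator {t..} (x\<^sup>2 + (0 + x * s)\<^sup>2) * indicator {0..} (0 + x * s)) \<partial>lborel)"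
      using True by (subst nn_integral_cmult) auto
    also have "\<dots> = (\<integral>\<^sup>+s. k x s \<partial>lborel)"
      using True unfolding k_def
      by (intro nn_integral_cong) (auto simp: ennreal_mult' power_mult_distrib algebra_simps zero_le_mult_iff split: split_indicator)
    finally show ?thesis using True by simp
  next
    case False
    then have "indicator {0..} x = (0::ennreal)" using that by (auto split: split_indicator)
    then show ?thesis by (simp add: k_def)
  qed
  have "(\<integral>\<^sup>+x. (\<integral>\<^sup>+y. ennreal (exp (- (x\<^sup>2 + y\<^sup>2))) * indicator {t..} (x\<^sup>2 + y\<^sup>2) * indicator {0..} y \<partial>lborel) * indicator {0..} x \<partial>lborel)
     = (\<integral>\<^sup>+x. \<integral>\<^sup>+s. k x s \<partial>lborel \<partial>lborel)"
    by (intro nn_integral_cong_AE, use AE_lborel_singleton[of 0] in eventually_elim) (use step1 in auto)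
  also have "\<dots> = (\<integral>\<^sup>+s. \<integral>\<^sup>+x. k x s \<partial>lborel \<partial>lborel)"
    by (rule lborel_pair.Fubini'[symmetric]) simp
  also have "\<dots> = (\<integral>\<^sup>+s. ennreal (exp (-t) / (2 * (1 + s\<^sup>2))) * indicator {0..} s \<partial>lborel)"
  proof (intro nn_integral_cong)
    fix s :: real
    define c where "c = 1 + s\<^sup>2"
    have c: "c > 0" unfolding c_def by (simp add: add_pos_nonneg)
    define a where "a = sqrt (t / c)"
    have a0: "0 \<le> a" unfolding a_def using t c by simp
    have iff: "0 \<le> x \<and> t \<le> x\<^sup>2 * c \<longleftrightarrow> a \<le> x" for x
    proof
      assume "0 \<le> x \<and> t \<le> x\<^sup>2 * c"
      then have "t / c \<le> x\<^sup>2" "0 \<le> x" using c by (auto simp: divide_le_eq)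
      then show "a \<le> x" unfolding a_def by (simp add: real_le_lsqrt)
    next
      assume "a \<le> x"
      then have "0 \<le> x" "sqrt (t/c) \<le> x" using a0 unfolding a_def by linarith+
      then have "t / c \<le> x\<^sup>2" using t c by (metis real_sqrt_le_iff real_sqrt_abs abs_of_nonneg power2_eq_square real_sqrt_ge_zero order_trans)
      then show "0 \<le> x \<and> t \<le> x\<^sup>2 * c" using \<open>0 \<le> x\<close> c by (auto simp: divide_le_eq)
    qed
    have kk: "k x s = ennreal (x * exp (- (c * x\<^sup>2))) * indicator {a..} x * indicator {0..} s" for x
      using iff[of x] unfolding k_def c_def[symmetric] by (auto simp: mult.commute split: split_indicator)
    have "(\<integral>\<^sup>+x. ennreal (x * exp (- (c * x\<^sup>2))) * indicator {a..} x \<partial>lborel) = ennreal (0 - (- exp (- (c * a\<^sup>2)) / (2 * c)))"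
    proof (rule nn_integral_FTC_atLeast)
      show "((\<lambda>x. - exp (- (c * x\<^sup>2)) / (2 * c)) \<longlongrightarrow> 0) at_top"
      proof -
        have "((\<lambda>x. - exp (- (c * x\<^sup>2)) / (2 * c)) \<longlongrightarrow> - 0 / (2 * c)) at_top"
          apply (intro tendsto_divide tendsto_minus filterlim_compose[OF exp_at_bot]
                   filterlim_compose[OF filterlim_uminus_at_bot_at_top])
          using c by (auto intro!: filterlim_tendsto_pos_mult_at_top filterlim_pow_at_top filterlim_ident)
        then show ?thesis by simp
      qed
    next
      fix x assume "a \<le> x"
      then show "0 \<le> x * exp (- (c * x\<^sup>2))" using a0 by simp
    next
      fix x
      show "((\<lambda>x. - exp (- (c * x\<^sup>2)) / (2 * c)) has_real_derivative x * exp (- (c * x\<^sup>2))) (at x)"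
        using c by (auto intro!: derivative_eq_intros simp: field_simps)
    qed simp
    also have "c * a\<^sup>2 = t" unfolding a_def using t c by simp
    finally have I: "(\<integral>\<^sup>+x. ennreal (x * exp (- (c * x\<^sup>2))) * indicator {a..} x \<partial>lborel) = ennreal (exp (-t) / (2 * c))"
      by simp
    show "(\<integral>\<^sup>+x. k x s \<partial>lborel) = ennreal (exp (-t) / (2 * (1 + s\<^sup>2))) * indicator {0..} s"
    proof -
      have "(\<integral>\<^sup>+x. k x s \<partial>lborel) = (\<integral>\<^sup>+x. ennreal (x * exp (- (c * x\<^sup>2))) * indicator {a..} x \<partial>lborel) * indicator {0..} s"
        unfolding kk by (rule nn_integral_multc) simp
      also note I
      finally show ?thesis by (simp add: c_def)
    qed
  qed
  also have "\<dots> = ennreal (exp (-t) * arctan 0 / 2 + (exp (-t) * (pi / 2) / 2 - exp (-t) * arctan 0 / 2))"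
  proof (subst nn_integral_FTC_atLeast)
    show "((\<lambda>a. exp (-t) * arctan a / 2) \<longlongrightarrow> exp (-t) * (pi / 2) / 2) at_top"
      by (intro tendsto_intros) (simp_all add: tendsto_arctan_at_top)
  qed (auto intro!: derivative_eq_intros simp: add_nonneg_eq_0_iff field_simps power2_eq_square)
  finally show ?thesis by simp
qed



lemma cgauss_tail:
  fixes t :: real assumes t: "0 \<le> t"
  shows "emeasure std_cgauss {z. t \<le> (cmod z)\<^sup>2} = ennreal (exp (-t))"
proof -
  define h where "h x y = ennreal (exp (- (x\<^sup>2 + y\<^sup>2))) * indicator {t..} (x\<^sup>2 + y\<^sup>2)" for x y :: real
  have [measurable]: "case_prod h \<in> borel_measurable (lborel \<Otimes>\<^sub>M lborel)" unfolding h_def by measurable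
  have cm: "(cmod (Complex x y))\<^sup>2 = x\<^sup>2 + y\<^sup>2" for x y by (simp add: cmod_def)
  have "emeasure std_cgauss {z. t \<le> (cmod z)\<^sup>2} =
        (\<integral>\<^sup>+z. ennreal (exp (- ((cmod z)\<^sup>2)) / pi) * indicator {z. t \<le> (cmod z)\<^sup>2} z \<partial>lborel)"
    unfolding std_cgauss_def by (subst emeasure_density) auto
  also have "\<dots> = (\<integral>\<^sup>+x. \<integral>\<^sup>+y. ennreal (1/pi) * h x y \<partial>lborel \<partial>lborel)"
    by (subst nn_integral_complex) (auto simp: cm h_def ennreal_mult'[symmetric] split: split_indicator intro!: nn_integral_cong)
  also have "\<dots> = ennreal (1/pi) * (\<integral>\<^sup>+x. \<integral>\<^sup>+y. h x y \<partial>lborel \<partial>lborel)"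
    by (simp add: nn_integral_cmult)
  also have "(\<integral>\<^sup>+x. \<integral>\<^sup>+y. h x y \<partial>lborel \<partial>lborel) = (\<integral>\<^sup>+x. 2 * (\<integral>\<^sup>+y. h x y * indicator {0..} y \<partial>lborel) \<partial>lborel)"
    by (intro nn_integral_cong nn_integral_even) (auto simp: h_def)
  also have "\<dots> = 2 * (\<integral>\<^sup>+x. (\<integral>\<^sup>+y. h x y * indicator {0..} y \<partial>lborel) \<partial>lborel)"
    by (rule nn_integral_cmult) simp
  also have "(\<integral>\<^sup>+x. (\<integral>\<^sup>+y. h x y * indicator {0..} y \<partial>lborel) \<partial>lborel) = 2 * (\<integral>\<^sup>+x. (\<integral>\<^sup>+y. h x y * indicator {0..} y \<partial>lborel) * indicator {0..} x \<partial>lborel)"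
    by (rule nn_integral_even) (auto simp: h_def)
  also have "(\<integral>\<^sup>+x. (\<integral>\<^sup>+y. h x y * indicator {0..} y \<partial>lborel) * indicator {0..} x \<partial>lborel) = ennreal (exp (-t) * pi / 4)"
    unfolding h_def by (rule quadrant[OF t])
  finally show ?thesis
    by (simp add: ennreal_mult'[symmetric] ennreal_mult[symmetric] ennreal_numeral[symmetric] del: ennreal_numeral)
qed

lemma prob_space_cgauss: "prob_space std_cgauss"
proof
  have "space std_cgauss = {z. 0 \<le> (cmod z)\<^sup>2}" by (simp add: std_cgauss_def)
  then show "emeasure std_cgauss (space std_cgauss) = 1" using cgauss_tail[of 0] by simp
qed



lemma cgauss_annulus:
  fixes a b :: real assumes "0 \<le> a" "a \<le> b"
  shows "emeasure std_cgauss {z. a \<le> (cmod z)\<^sup>2 \<and> (cmod z)\<^sup>2 < b} = ennreal (exp (-a) - exp (-b))"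
proof -
  interpret prob_space std_cgauss by (rule prob_space_cgauss)
  have sets: "{z. t \<le> (cmod z)\<^sup>2} \<in> sets std_cgauss" for t :: real
    by (simp add: std_cgauss_def)
  have eq: "{z. a \<le> (cmod z)\<^sup>2 \<and> (cmod z)\<^sup>2 < b} = {z. a \<le> (cmod z)\<^sup>2} - {z. b \<le> (cmod z)\<^sup>2}" by auto
  have "emeasure std_cgauss ({z. a \<le> (cmod z)\<^sup>2} - {z. b \<le> (cmod z)\<^sup>2}) = emeasure std_cgauss {z. a \<le> (cmod z)\<^sup>2} - emeasure std_cgauss {z. b \<le> (cmod z)\<^sup>2}"
    using assms by (intro emeasure_Diff sets) auto
  also have "\<dots> = ennreal (exp (-a) - exp (-b))"
    using assms by (simp add: cgauss_tail ennreal_minus)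
  finally show ?thesis using eq by simp
qed

lemma PG: "product_prob_space (\<lambda>_::int. std_cgauss)"
  by (simp add: product_prob_space_def product_prob_space_axioms_def product_sigma_finite_def
      prob_space_cgauss prob_space_imp_sigma_finite)

lemma lam_pos: "lam k \<ge> 1/2"
  unfolding lam_def by (simp add: divide_le_eq)

definition scl :: "(int \<Rightarrow> complex) \<Rightarrow> int \<Rightarrow> complex" where
  "scl g k = g k / complex_of_real (sqrt (lam k))"

lemma scl_meas: "scl \<in> PiM UNIV (\<lambda>_. std_cgauss) \<rightarrow>\<^sub>M PiM UNIV (\<lambda>_. borel)"
  unfolding scl_def
  by (rule measurable_PiM_single') (auto simp: std_cgauss_def space_PiM intro!: measurable_compose[OF measurable_component_singleton])

lemma mu0_eq: "mu0 = distr (PiM UNIV (\<lambda>_. std_cgauss)) (PiM UNIV (\<lambda>_. borel)) scl"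
  unfolding mu0_def scl_def[abs_def] ..

lemma prob_mu0: "prob_space mu0"
proof -
  interpret product_prob_space "\<lambda>_. std_cgauss" "UNIV::int set" by (rule PG)
  show ?thesis unfolding mu0_eq by (rule prob_space_distr[OF scl_meas])
qed

lemma space_mu0: "space mu0 = UNIV"
  by (simp add: mu0_def space_PiM)

lemma sets_mu0: "sets mu0 = sets (PiM UNIV (\<lambda>_::int. (borel :: complex measure)))"
  by (simp add: mu0_def)

lemma nat_floor_iff: "0 \<le> x \<Longrightarrow> nat \<lfloor>x\<rfloor> = n \<longleftrightarrow> real n \<le> x \<and> x < real n + 1"
  by (auto simp: nat_eq_iff floor_eq_iff)



lemma Pmodes_sub: "Pmodes Le \<subseteq> {-\<lfloor>sqrt Le\<rfloor> .. \<lfloor>sqrt Le\<rfloor>}"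
proof
  fix k assume "k \<in> Pmodes Le"
  then have "((2 * pi * real_of_int k)^2 + 1) / 2 \<le> Le" by (simp add: Pmodes_def lam_def)
  moreover have "(real_of_int k)^2 \<le> (2 * pi * real_of_int k)^2 / 2"
  proof -
    have "(2::real)^2 \<le> pi^2" using pi_ge_two by (intro power_mono) auto
    then have "1 \<le> 2 * pi^2" by simp
    then have "1 * (real_of_int k)^2 \<le> (2 * pi^2) * (real_of_int k)^2" by (intro mult_right_mono) auto
    then show ?thesis by (simp add: power_mult_distrib)
  qed
  ultimately have "(real_of_int k)^2 \<le> Le" by (simp add: field_simps)
  then have "\<bar>real_of_int k\<bar> \<le> sqrt Le" by (simp add: real_le_rsqrt)
  then have "\<bar>k\<bar> \<le> \<lfloor>sqrt Le\<rfloor>" by (simp add: le_floor_iff)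
  then show "k \<in> {-\<lfloor>sqrt Le\<rfloor> .. \<lfloor>sqrt Le\<rfloor>}" by auto
qed

lemma finite_Pmodes: "finite (Pmodes Le)"
  using Pmodes_sub finite_subset by blast

lemma card_Pmodes: "0 \<le> Le \<Longrightarrow> real (card (Pmodes Le)) \<le> 2 * sqrt Le + 1"
proof -
  assume "0 \<le> Le"
  have "card (Pmodes Le) \<le> card {-\<lfloor>sqrt Le\<rfloor> .. \<lfloor>sqrt Le\<rfloor>}" by (intro card_mono Pmodes_sub) auto
  also have "\<dots> = nat (2 * \<lfloor>sqrt Le\<rfloor> + 1)" by simp
  finally have "real (card (Pmodes Le)) \<le> real (nat (2 * \<lfloor>sqrt Le\<rfloor> + 1))" by linarith
  also have "\<dots> = 2 * real_of_int \<lfloor>sqrt Le\<rfloor> + 1" using \<open>0 \<le> Le\<close> by simp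
  also have "\<dots> \<le> 2 * sqrt Le + 1" by simp
  finally show ?thesis .
qed

definition phi :: "real \<Rightarrow> real \<Rightarrow> (int \<Rightarrow> complex) \<Rightarrow> int \<Rightarrow> nat" where
  "phi tau Le u = (\<lambda>k. if k \<in> Pmodes Le then nat \<lfloor>tau * (cmod (u k))\<^sup>2\<rfloor> else 0)"

lemma countable_occ: "countable (occ Le)"
proof -
  have "occ Le = (\<lambda>f k. if k \<in> Pmodes Le then f k else 0) ` (Pi\<^sub>E (Pmodes Le) (\<lambda>_. UNIV :: nat set))"
  proof (intro set_eqI iffI)
    fix n assume "n \<in> occ Le"
    then have "n = (\<lambda>k. if k \<in> Pmodes Le then restrict n (Pmodes Le) k else 0)"
      by (auto simp: occ_def)
    then show "n \<in> (\<lambda>f k. if k \<in> Pmodes Le then f k else 0) ` (Pi\<^sub>E (Pmodes Le) (\<lambda>_. UNIV :: nat set))"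
      by (intro image_eqI[where x="restrict n (Pmodes Le)"]) auto
  qed (auto simp: occ_def)
  then show ?thesis by (auto intro!: countable_PiE finite_Pmodes)
qed

lemma phi_occ: "phi tau Le u \<in> occ Le"
  by (simp add: phi_def occ_def)

lemma phi_pre: "n \<in> occ Le \<Longrightarrow> {u. phi tau Le u = n} = {u. \<forall>k\<in>Pmodes Le. nat \<lfloor>tau * (cmod (u k))\<^sup>2\<rfloor> = n k}"
  by (auto simp: phi_def occ_def fun_eq_iff)

lemma phi_pre_sets: "{u. \<forall>k\<in>Pmodes Le. nat \<lfloor>tau * (cmod (u k))\<^sup>2\<rfloor> = n k} \<in> sets (PiM UNIV (\<lambda>_::int. (borel :: complex measure)))"
proof -
  have "{u \<in> space (PiM UNIV (\<lambda>_::int. (borel :: complex measure))). \<forall>k\<in>Pmodes Le. nat \<lfloor>tau * (cmod (u k))\<^sup>2\<rfloor> = n k} \<in> sets (PiM UNIV (\<lambda>_::int. (borel :: complex measure)))"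
    using finite_Pmodes by measurable
  then show ?thesis by (simp add: space_PiM)
qed

lemma phi_meas: "phi tau Le \<in> mu0 \<rightarrow>\<^sub>M count_space (occ Le)"
proof (subst measurable_count_space_eq_countable[OF countable_occ], intro conjI ballI)
  show "phi tau Le \<in> space mu0 \<rightarrow> occ Le" using phi_occ by auto
  fix n assume "n \<in> occ Le"
  then show "phi tau Le -` {n} \<inter> space mu0 \<in> sets mu0"
    using phi_pre[of n Le tau] phi_pre_sets[of Le tau n] by (simp add: space_mu0 sets_mu0 vimage_def)
qed



definition pw :: "real \<Rightarrow> real \<Rightarrow> (int \<Rightarrow> nat) \<Rightarrow> real" where
  "pw tau Le n = (\<Prod>k\<in>Pmodes Le. exp (- (real (n k) * lam k / tau)) - exp (- ((real (n k) + 1) * lam k / tau)))"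

lemma box:
  assumes tau: "tau > 0" and n: "n \<in> occ Le"
  shows "emeasure mu0 {u. phi tau Le u = n} = ennreal (pw tau Le n)"
proof -
  interpret product_prob_space "\<lambda>_. std_cgauss" "UNIV::int set" by (rule PG)
  define a where "a k = real (n k) * lam k / tau" for k
  define b where "b k = (real (n k) + 1) * lam k / tau" for k
  define B where "B k = {z. a k \<le> (cmod z)\<^sup>2 \<and> (cmod z)\<^sup>2 < b k}" for k
  have lp: "lam k > 0" for k using lam_pos[of k] by linarith
  have cm: "(cmod (z / complex_of_real (sqrt (lam k))))\<^sup>2 = (cmod z)\<^sup>2 / lam k" for z k
    using lp[of k] by (simp add: norm_divide power_divide)
  have iff: "nat \<lfloor>tau * (cmod z)\<^sup>2 / lam k\<rfloor> = n k \<longleftrightarrow> z \<in> B k" for z k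
  proof -
    have "nat \<lfloor>tau * (cmod z)\<^sup>2 / lam k\<rfloor> = n k \<longleftrightarrow> real (n k) \<le> tau * (cmod z)\<^sup>2 / lam k \<and> tau * (cmod z)\<^sup>2 / lam k < real (n k) + 1"
      using tau lp[of k] by (intro nat_floor_iff) simp
    also have "\<dots> \<longleftrightarrow> z \<in> B k"
      using tau lp[of k] by (simp add: B_def a_def b_def field_simps)
    finally show ?thesis .
  qed
  have "emeasure mu0 {u. phi tau Le u = n} = emeasure (PiM UNIV (\<lambda>_. std_cgauss)) (scl -` {u. phi tau Le u = n} \<inter> space (PiM UNIV (\<lambda>_. std_cgauss)))"
    unfolding mu0_eq using phi_pre_sets[of Le tau n] phi_pre[OF n, of tau]
    by (intro emeasure_distr scl_meas) simp
  also have "scl -` {u. phi tau Le u = n} \<inter> space (PiM UNIV (\<lambda>_. std_cgauss)) = prod_emb UNIV (\<lambda>_. std_cgauss) (Pmodes Le) (Pi\<^sub>E (Pmodes Le) B)"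
    unfolding phi_pre[OF n] prod_emb_def by (auto simp: scl_def cm iff space_PiM)
  also have "emeasure (PiM UNIV (\<lambda>_. std_cgauss)) \<dots> = (\<Prod>k\<in>Pmodes Le. emeasure std_cgauss (B k))"
    by (rule emeasure_PiM_emb) (auto simp: finite_Pmodes B_def std_cgauss_def)
  also have "\<dots> = (\<Prod>k\<in>Pmodes Le. ennreal (exp (- a k) - exp (- b k)))"
  proof (intro prod.cong refl)
    fix k
    show "emeasure std_cgauss (B k) = ennreal (exp (- a k) - exp (- b k))"
      unfolding B_def using tau lp[of k] by (intro cgauss_annulus) (auto simp: a_def b_def field_simps)
  qed
  also have "\<dots> = ennreal (pw tau Le n)"
    unfolding pw_def a_def b_def using tau lp
    by (subst prod_ennreal) (auto simp: field_simps less_imp_le[OF lp])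
  finally show ?thesis .
qed



lemma pw_nonneg: "tau > 0 \<Longrightarrow> 0 \<le> pw tau Le n"
proof -
  assume tau: "tau > 0"
  have "0 \<le> exp (- (real (n k) * lam k / tau)) - exp (- ((real (n k) + 1) * lam k / tau))" for k
    using lam_pos[of k] tau by (simp add: field_simps)
  then show ?thesis unfolding pw_def by (intro prod_nonneg) auto
qed

lemma nn_count:
  fixes G :: "(int \<Rightarrow> nat) \<Rightarrow> real"
  assumes tau: "tau > 0"
  shows "(\<integral>\<^sup>+u. ennreal (G (phi tau Le u)) \<partial>mu0) = (\<integral>\<^sup>+n. ennreal (pw tau Le n * G n) \<partial>count_space (occ Le))"
proof -
  have eq: "distr mu0 (count_space (occ Le)) (phi tau Le) = density (count_space (occ Le)) (\<lambda>n. ennreal (pw tau Le n))"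
  proof (rule measure_eqI_countable[OF _ _ countable_occ])
    fix n assume n: "n \<in> occ Le"
    have "emeasure (distr mu0 (count_space (occ Le)) (phi tau Le)) {n} = emeasure mu0 (phi tau Le -` {n} \<inter> space mu0)"
      using n by (intro emeasure_distr phi_meas) auto
    also have "\<dots> = ennreal (pw tau Le n)"
      using box[OF tau n] by (simp add: space_mu0 vimage_def)
    also have "\<dots> = emeasure (density (count_space (occ Le)) (\<lambda>n. ennreal (pw tau Le n))) {n}"
      using n by (simp add: emeasure_density)
    finally show "emeasure (distr mu0 (count_space (occ Le)) (phi tau Le)) {n} = emeasure (density (count_space (occ Le)) (\<lambda>n. ennreal (pw tau Le n))) {n}" .
  qed auto
  have "(\<integral>\<^sup>+u. ennreal (G (phi tau Le u)) \<partial>mu0) = (\<integral>\<^sup>+n. ennreal (G n) \<partial>distr mu0 (count_space (occ Le)) (phi tau Le))"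
    by (rule nn_integral_distr[symmetric]) (auto intro: phi_meas)
  also have "\<dots> = (\<integral>\<^sup>+n. ennreal (pw tau Le n) * ennreal (G n) \<partial>count_space (occ Le))"
    unfolding eq by (subst nn_integral_density) auto
  also have "\<dots> = (\<integral>\<^sup>+n. ennreal (pw tau Le n * G n) \<partial>count_space (occ Le))"
    by (intro nn_integral_cong) (simp add: ennreal_mult' pw_nonneg[OF tau])
  finally show ?thesis .
qed



definition cst :: "real \<Rightarrow> real \<Rightarrow> real" where
  "cst tau Le = (\<Prod>k\<in>Pmodes Le. 1 - exp (- (lam k / tau)))"

lemma cst_pos: "tau > 0 \<Longrightarrow> cst tau Le > 0"
proof -
  assume tau: "tau > 0"
  have "0 < 1 - exp (- (lam k / tau))" for k
    using lam_pos[of k] tau by simp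
  then show ?thesis unfolding cst_def by (intro prod_pos) auto
qed

lemma pw_eq: "tau > 0 \<Longrightarrow> pw tau Le n = cst tau Le * exp (- H_eig tau Le n)"
proof -
  assume tau: "tau > 0"
  have f: "exp (- (real (n k) * lam k / tau)) - exp (- ((real (n k) + 1) * lam k / tau))
      = (1 - exp (- (lam k / tau))) * exp (- (lam k * real (n k) / tau))" for k
    by (simp add: algebra_simps add_divide_distrib exp_add[symmetric] exp_diff diff_divide_distrib)
  have "exp (- H_eig tau Le n) = (\<Prod>k\<in>Pmodes Le. exp (- (lam k * real (n k) / tau)))"
    unfolding H_eig_def using finite_Pmodes
    by (simp add: exp_sum[symmetric] sum_divide_distrib sum_negf)
  then show ?thesis unfolding pw_def cst_def f prod.distrib by simp
qed

lemma real_count: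
  fixes G :: "(int \<Rightarrow> nat) \<Rightarrow> real"
  assumes tau: "tau > 0" and G: "\<And>n. 0 \<le> G n \<and> G n \<le> 1"
  shows "(\<integral>u. G (phi tau Le u) \<partial>mu0) = (\<Sum>\<^sub>\<infinity>n\<in>occ Le. pw tau Le n * G n)"
proof -
  interpret prob_space mu0 by (rule prob_mu0)
  have Gm: "(\<lambda>u. G (phi tau Le u)) \<in> borel_measurable mu0"
    by (rule measurable_compose[OF phi_meas]) simp
  have F: "(\<integral>\<^sup>+n. ennreal (pw tau Le n * G n) \<partial>count_space (occ Le)) = (\<integral>\<^sup>+u. ennreal (G (phi tau Le u)) \<partial>mu0)"
    by (rule nn_count[symmetric, OF tau])
  also have "\<dots> \<le> (\<integral>\<^sup>+u. 1 \<partial>mu0)"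
    using G by (intro nn_integral_mono) simp
  also have "\<dots> = 1" by (simp add: emeasure_space_1)
  finally have Fle: "(\<integral>\<^sup>+n. ennreal (pw tau Le n * G n) \<partial>count_space (occ Le)) \<le> 1" .
  have nn: "0 \<le> pw tau Le n * G n" for n using pw_nonneg[OF tau] G by simp
  have as: "Infinite_Set_Sum.abs_summable_on (\<lambda>n. pw tau Le n * G n) (occ Le)"
    unfolding Infinite_Set_Sum.abs_summable_on_def
  proof (rule integrableI_bounded)
    show "(\<integral>\<^sup>+n. ennreal (norm (pw tau Le n * G n)) \<partial>count_space (occ Le)) < \<infinity>"
      using Fle nn by (simp add: abs_of_nonneg) (metis ennreal_one_less_top order.strict_trans1)
  qed simp
  have "(\<integral>u. G (phi tau Le u) \<partial>mu0) = enn2real (\<integral>\<^sup>+u. ennreal (G (phi tau Le u)) \<partial>mu0)"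
    using G by (intro integral_eq_nn_integral Gm) auto
  also have "\<dots> = enn2real (\<integral>\<^sup>+n. ennreal (pw tau Le n * G n) \<partial>count_space (occ Le))"
    using F by simp
  also have "\<dots> = infsetsum (\<lambda>n. pw tau Le n * G n) (occ Le)"
    by (subst nn_integral_conv_infsetsum[OF as nn]) (simp add: infsetsum_nonneg nn)
  also have "\<dots> = (\<Sum>\<^sub>\<infinity>n\<in>occ Le. pw tau Le n * G n)"
    by (rule infsetsum_infsum[OF as])
  finally show ?thesis .
qed

lemma trace_eq:
  fixes g :: "real \<Rightarrow> real"
  assumes tau: "tau > 0" and g: "\<And>x. 0 \<le> x \<Longrightarrow> 0 \<le> g x \<and> g x \<le> 1"
  shows "fock_gibbs_trace tau Le g = (\<integral>u. g (N_eig Le (phi tau Le u)) \<partial>mu0)"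
proof -
  interpret prob_space mu0 by (rule prob_mu0)
  have Nn: "0 \<le> N_eig Le n" for n unfolding N_eig_def by (simp add: sum_nonneg)
  have c: "cst tau Le > 0" by (rule cst_pos[OF tau])
  have w: "exp (- H_eig tau Le n) = (1 / cst tau Le) * pw tau Le n" for n
    using pw_eq[OF tau, of Le n] c by simp
  have one: "(\<Sum>\<^sub>\<infinity>n\<in>occ Le. pw tau Le n * 1) = 1"
    using real_count[OF tau, of "\<lambda>_. 1" Le] by (simp add: prob_space)
  have S1: "(\<Sum>\<^sub>\<infinity>n\<in>occ Le. exp (- H_eig tau Le n)) = 1 / cst tau Le"
    unfolding w infsum_cmult_right' using one by simp
  have S2: "(\<Sum>\<^sub>\<infinity>n\<in>occ Le. exp (- H_eig tau Le n) * g (N_eig Le n)) = (1 / cst tau Le) * (\<Sum>\<^sub>\<infinity>n\<in>occ Le. pw tau Le n * g (N_eig Le n))"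
    unfolding w mult.assoc infsum_cmult_right' ..
  have "fock_gibbs_trace tau Le g = (\<Sum>\<^sub>\<infinity>n\<in>occ Le. pw tau Le n * g (N_eig Le n))"
    unfolding fock_gibbs_trace_def S1 S2 using c by simp
  also have "\<dots> = (\<integral>u. g (N_eig Le (phi tau Le u)) \<partial>mu0)"
    by (rule real_count[OF tau, symmetric]) (use g Nn in auto)
  finally show ?thesis .
qed



lemma lip:
  assumes c: "is_cutoff KK eta Cf D" and x: "0 \<le> x" and y: "0 \<le> y"
  shows "\<bar>D 0 x - D 0 y\<bar> \<le> Cf 1 * eta powr (-1) * \<bar>x - y\<bar>"
proof -
  have A: "\<forall>j. \<forall>x\<ge>0. (D j has_real_derivative D (Suc j) x) (at x within {0..})"
    and E: "\<forall>j. \<forall>x\<ge>0. \<bar>D j x\<bar> \<le> Cf j * eta powr (- real j)"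
    using c unfolding is_cutoff_def by blast+
  have der: "\<And>z. 0 \<le> z \<Longrightarrow> (D 0 has_real_derivative D 1 z) (at z within {0..})"
    using A by simp
  have bd: "\<And>z. 0 \<le> z \<Longrightarrow> \<bar>D 1 z\<bar> \<le> Cf 1 * eta powr (-1)"
  proof -
    fix z :: real assume "0 \<le> z"
    have E1: "\<forall>x\<ge>0. \<bar>D 1 x\<bar> \<le> Cf 1 * eta powr (- real (1::nat))" using E by blast
    with \<open>0 \<le> z\<close> show "\<bar>D 1 z\<bar> \<le> Cf 1 * eta powr (-1)" by simp
  qed
  have main: "\<bar>D 0 b - D 0 a\<bar> \<le> Cf 1 * eta powr (-1) * \<bar>b - a\<bar>" if ab: "0 \<le> a" "a \<le> b" for a b
  proof -
    have "\<exists>z\<in>{a..b}. D 0 b - D 0 a = (\<lambda>h. D 1 z * h) (b - a)"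
    proof (rule mvt_very_simple[OF \<open>a \<le> b\<close>])
      fix z assume "a \<le> z" "z \<le> b"
      then have "(D 0 has_real_derivative D 1 z) (at z within {a..b})"
        using ab by (intro DERIV_subset[OF der]) auto
      then show "(D 0 has_derivative (\<lambda>h. D 1 z * h)) (at z within {a..b})"
        by (simp add: has_field_derivative_def)
    qed
    then obtain z where z: "z \<in> {a..b}" "D 0 b - D 0 a = D 1 z * (b - a)" by auto
    have "\<bar>D 0 b - D 0 a\<bar> = \<bar>b - a\<bar> * \<bar>D 1 z\<bar>" using z by (simp add: abs_mult)
    also have "\<dots> \<le> \<bar>b - a\<bar> * (Cf 1 * eta powr (-1))"
      using z ab by (intro mult_left_mono bd) auto
    finally show ?thesis by (simp add: mult.commute)
  qed
  show ?thesis
  proof (cases "x \<le> y")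
    case True then show ?thesis using main[OF x True] by (simp add: abs_minus_commute)
  next
    case False then show ?thesis using main[OF y] by simp
  qed
qed

lemma D0_cont:
  assumes c: "is_cutoff KK eta Cf D"
  shows "continuous_on {0..} (D 0)"
proof -
  have A: "\<forall>j. \<forall>x\<ge>0. (D j has_real_derivative D (Suc j) x) (at x within {0..})"
    using c unfolding is_cutoff_def by blast
  have der: "\<And>z. 0 \<le> z \<Longrightarrow> (D 0 has_real_derivative D 1 z) (at z within {0..})"
    using A by simp
  show ?thesis unfolding continuous_on_eq_continuous_within
    using der DERIV_continuous by blast
qed

lemma normP_meas: "normP_sq Le \<in> borel_measurable mu0"
proof -
  have "normP_sq Le \<in> borel_measurable (PiM UNIV (\<lambda>_::int. (borel :: complex measure)))"
    unfolding normP_sq_def[abs_def] by measurable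
  then show ?thesis by (simp add: measurable_cong_sets[OF sets_mu0 refl])
qed

lemma D0_normP_meas:
  assumes c: "is_cutoff KK eta Cf D"
  shows "(\<lambda>u. D 0 (normP_sq Le u)) \<in> borel_measurable mu0"
proof -
  have "continuous_on UNIV (\<lambda>x. D 0 (max 0 x))"
    by (rule continuous_on_compose2[OF D0_cont[OF c]]) (auto intro!: continuous_intros)
  then have m: "(\<lambda>x. D 0 (max 0 x)) \<in> borel_measurable borel"
    by (rule borel_measurable_continuous_onI)
  have "(\<lambda>u. D 0 (max 0 (normP_sq Le u))) \<in> borel_measurable mu0"
    by (rule measurable_compose[OF normP_meas m])
  moreover have "max 0 (normP_sq Le u) = normP_sq Le u" for u
    by (simp add: normP_sq_def sum_nonneg)
  ultimately show ?thesis by simp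
qed

lemma floor_diff:
  assumes tau: "tau > 0"
  shows "\<bar>normP_sq Le u - N_eig Le (phi tau Le u) / tau\<bar> \<le> real (card (Pmodes Le)) / tau"
proof -
  have t: "\<bar>(cmod (u k))\<^sup>2 - real (nat \<lfloor>tau * (cmod (u k))\<^sup>2\<rfloor>) / tau\<bar> \<le> 1 / tau" for k
  proof -
    define s where "s = tau * (cmod (u k))\<^sup>2"
    have s0: "0 \<le> s" unfolding s_def using tau by simp
    have "real (nat \<lfloor>s\<rfloor>) = of_int \<lfloor>s\<rfloor>" using s0 by simp
    then have a: "real (nat \<lfloor>s\<rfloor>) \<le> s" "s < real (nat \<lfloor>s\<rfloor>) + 1" by linarith+
    have e: "(cmod (u k))\<^sup>2 = s / tau" unfolding s_def using tau by simp
    have "\<bar>s / tau - real (nat \<lfloor>s\<rfloor>) / tau\<bar> = \<bar>s - real (nat \<lfloor>s\<rfloor>)\<bar> / tau"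
      using tau by (simp add: diff_divide_distrib[symmetric])
    also have "\<dots> \<le> 1 / tau"
    proof -
      have "\<bar>s - real (nat \<lfloor>s\<rfloor>)\<bar> \<le> 1" using a by linarith
      then show ?thesis using tau by (intro divide_right_mono) auto
    qed
    finally have fin: "\<bar>s / tau - real (nat \<lfloor>s\<rfloor>) / tau\<bar> \<le> 1 / tau" .
    have e2: "tau * (cmod (u k))\<^sup>2 = s" by (simp add: s_def)
    show ?thesis unfolding e2 unfolding e using fin .
  qed
  have "normP_sq Le u - N_eig Le (phi tau Le u) / tau = (\<Sum>k\<in>Pmodes Le. (cmod (u k))\<^sup>2 - real (nat \<lfloor>tau * (cmod (u k))\<^sup>2\<rfloor>) / tau)"
    unfolding normP_sq_def N_eig_def phi_def by (simp add: sum_subtractf sum_divide_distrib)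
  also have "\<bar>\<dots>\<bar> \<le> (\<Sum>k\<in>Pmodes Le. \<bar>(cmod (u k))\<^sup>2 - real (nat \<lfloor>tau * (cmod (u k))\<^sup>2\<rfloor>) / tau\<bar>)"
    by (rule sum_abs)
  also have "\<dots> \<le> (\<Sum>k\<in>Pmodes Le. 1 / tau)" by (intro sum_mono t)
  finally show ?thesis by simp
qed



lemma arith_bound:
  assumes tau: "tau \<ge> 1" and eta: "tau powr (-1/64) \<le> eta"
    and Le: "Le powr (1/8) \<le> tau powr (1/32)" and L0: "0 \<le> c * eta powr (-1)"
  shows "c * eta powr (-1) * (real (card (Pmodes Le)) / tau) \<le> (3 * \<bar>c\<bar> + 1) * tau powr (-1/4)"
proof -
  have tp: "tau > 0" using tau by simp
  have "0 < tau powr (-1/64)" using tp by simp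
  then have etap: "eta > 0" using eta by linarith
  have e1: "eta powr (-1) \<le> tau powr (1/64)"
  proof -
    have "eta powr (-1) = 1 / eta" using etap by (simp add: powr_minus_divide)
    also have "\<dots> \<le> 1 / tau powr (-1/64)" using eta etap tp by (intro divide_left_mono) (auto intro!: mult_pos_pos)
    also have "\<dots> = tau powr (1/64)" using tp by (simp add: powr_minus_divide)
    finally show ?thesis .
  qed
  have b1: "1 \<le> tau powr (1/8)" using tau by (simp add: ge_one_powr_ge_zero)
  have card: "real (card (Pmodes Le)) \<le> 3 * tau powr (1/8)"
  proof (cases "0 \<le> Le")
    case True
    have "sqrt Le = (Le powr (1/8)) powr 4" using True by (simp add: powr_powr powr_half_sqrt[symmetric])
    also have "\<dots> \<le> (tau powr (1/32)) powr 4" by (intro powr_mono2 Le) auto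
    also have "\<dots> = tau powr (1/8)" by (simp add: powr_powr)
    finally have "sqrt Le \<le> tau powr (1/8)" .
    then show ?thesis using card_Pmodes[OF True] b1 by linarith
  next
    case False
    have "\<not> lam k \<le> Le" for k using lam_pos[of k] False by linarith
    then have "Pmodes Le = {}" by (auto simp: Pmodes_def)
    then show ?thesis using b1 by simp
  qed
  have L: "c * eta powr (-1) \<le> \<bar>c\<bar> * tau powr (1/64)"
  proof -
    have "c * eta powr (-1) \<le> \<bar>c\<bar> * eta powr (-1)" by (intro mult_right_mono) auto
    also have "\<dots> \<le> \<bar>c\<bar> * tau powr (1/64)" by (intro mult_left_mono e1) auto
    finally show ?thesis .
  qed
  have "c * eta powr (-1) * (real (card (Pmodes Le)) / tau) \<le> (\<bar>c\<bar> * tau powr (1/64)) * (3 * tau powr (1/8) / tau)"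
    using L0 tp card L e1 etap by (intro mult_mono divide_right_mono) auto
  also have "\<dots> = 3 * \<bar>c\<bar> * (tau powr (1/64) * tau powr (1/8) / tau powr 1)" using tp by simp
  also have "tau powr (1/64) * tau powr (1/8) / tau powr 1 = tau powr (1/64 + 1/8 - 1)"
    by (simp only: powr_diff powr_add)
  also have "tau powr (1/64 + 1/8 - 1) \<le> tau powr (-1/4)" using tau by (intro powr_mono) auto
  then have "3 * \<bar>c\<bar> * tau powr (1/64 + 1/8 - 1) \<le> 3 * \<bar>c\<bar> * tau powr (-1/4)" by (intro mult_left_mono) auto
  also have "\<dots> \<le> (3 * \<bar>c\<bar> + 1) * tau powr (-1/4)" by (intro mult_right_mono) auto
  finally show ?thesis by simp
qed

theorem lemmaA2:
  fixes KK :: real and Cf :: "nat \<Rightarrow> real"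
  assumes "KK > 0"
  shows "\<exists>C>0. \<exists>tau0. \<forall>tau Le eta D.
           tau \<ge> tau0 \<longrightarrow>
           tau powr (-1/64) \<le> eta \<longrightarrow> eta < KK^2 / 2 \<longrightarrow>
           1 / eta \<le> Le powr (1/8) \<longrightarrow> Le powr (1/8) \<le> tau powr (1/32) \<longrightarrow>
           is_cutoff KK eta Cf D \<longrightarrow>
           \<bar>fock_gibbs_trace tau Le (\<lambda>x. D 0 (x / tau))
              - (\<integral>u. D 0 (normP_sq Le u) \<partial>mu0)\<bar> \<le> C * tau powr (-1/4)"
proof (rule exI[of _ "3 * \<bar>Cf 1\<bar> + 1"], intro conjI exI[of _ "1::real"] allI impI)
  show "0 < 3 * \<bar>Cf 1\<bar> + 1" by simp
  fix tau Le eta :: real and D :: "nat \<Rightarrow> real \<Rightarrow> real"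
  assume tau: "1 \<le> tau" and eta: "tau powr (-1/64) \<le> eta" and "eta < KK^2 / 2"
    and "1 / eta \<le> Le powr (1/8)" and Le: "Le powr (1/8) \<le> tau powr (1/32)"
    and c: "is_cutoff KK eta Cf D"
  interpret prob_space mu0 by (rule prob_mu0)
  have tp: "tau > 0" using tau by simp
  have D01: "\<And>x. 0 \<le> x \<Longrightarrow> 0 \<le> D 0 x \<and> D 0 x \<le> 1" using c unfolding is_cutoff_def by blast
  have E: "\<forall>j. \<forall>x\<ge>0. \<bar>D j x\<bar> \<le> Cf j * eta powr (- real j)" using c unfolding is_cutoff_def by blast
  then have "\<bar>D 1 0\<bar> \<le> Cf 1 * eta powr (- real (1::nat))" by blast
  then have "\<bar>D 1 0\<bar> \<le> Cf 1 * eta powr (-1)" by (simp only: of_nat_1)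
  then have L0: "0 \<le> Cf 1 * eta powr (-1)" by (rule order_trans[OF abs_ge_zero])
  define B where "B = Cf 1 * eta powr (-1) * (real (card (Pmodes Le)) / tau)"
  have Nn: "0 \<le> N_eig Le n" for n unfolding N_eig_def by (simp add: sum_nonneg)
  have Pn: "0 \<le> normP_sq Le u" for u unfolding normP_sq_def by (simp add: sum_nonneg)
  have tr: "fock_gibbs_trace tau Le (\<lambda>x. D 0 (x / tau)) = (\<integral>u. D 0 (N_eig Le (phi tau Le u) / tau) \<partial>mu0)"
    by (rule trace_eq[OF tp]) (use D01 tp in auto)
  have m1: "(\<lambda>u. D 0 (N_eig Le (phi tau Le u) / tau)) \<in> borel_measurable mu0"
    by (rule measurable_compose[OF phi_meas]) simp
  have i1: "integrable mu0 (\<lambda>u. D 0 (N_eig Le (phi tau Le u) / tau))"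
    by (rule integrable_const_bound[where B=1]) (use m1 D01 Nn tp in auto)
  have m2: "(\<lambda>u. D 0 (normP_sq Le u)) \<in> borel_measurable mu0" by (rule D0_normP_meas[OF c])
  have i2: "integrable mu0 (\<lambda>u. D 0 (normP_sq Le u))"
    by (rule integrable_const_bound[where B=1]) (use m2 D01 Pn in auto)
  have pt: "\<bar>D 0 (N_eig Le (phi tau Le u) / tau) - D 0 (normP_sq Le u)\<bar> \<le> B" for u
  proof -
    have "\<bar>D 0 (N_eig Le (phi tau Le u) / tau) - D 0 (normP_sq Le u)\<bar> \<le> Cf 1 * eta powr (-1) * \<bar>N_eig Le (phi tau Le u) / tau - normP_sq Le u\<bar>"
      by (rule lip[OF c]) (use Nn Pn tp in auto)
    also have "\<dots> \<le> B" unfolding B_def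
      using floor_diff[OF tp, of Le u] L0 by (intro mult_left_mono) (auto simp: abs_minus_commute)
    finally show ?thesis .
  qed
  have "\<bar>fock_gibbs_trace tau Le (\<lambda>x. D 0 (x / tau)) - (\<integral>u. D 0 (normP_sq Le u) \<partial>mu0)\<bar>
      = \<bar>\<integral>u. D 0 (N_eig Le (phi tau Le u) / tau) - D 0 (normP_sq Le u) \<partial>mu0\<bar>"
    unfolding tr by (simp add: Bochner_Integration.integral_diff[OF i1 i2])
  also have "\<dots> \<le> (\<integral>u. \<bar>D 0 (N_eig Le (phi tau Le u) / tau) - D 0 (normP_sq Le u)\<bar> \<partial>mu0)"
    using integral_norm_bound[of mu0 "\<lambda>u. D 0 (N_eig Le (phi tau Le u) / tau) - D 0 (normP_sq Le u)"] by simp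
  also have "\<dots> \<le> B"
    by (intro integral_le_const) (use i1 i2 pt in auto)
  also have "B \<le> (3 * \<bar>Cf 1\<bar> + 1) * tau powr (-1/4)"
    unfolding B_def by (rule arith_bound[OF tau eta Le L0])
  finally show "\<bar>fock_gibbs_trace tau Le (\<lambda>x. D 0 (x / tau)) - (\<integral>u. D 0 (normP_sq Le u) \<partial>mu0)\<bar> \<le> (3 * \<bar>Cf 1\<bar> + 1) * tau powr (-1/4)" .
qed


end
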